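(* Let $A$ be an algorithm that, given any input of $N$ elements of which at least $\frac34 N$ are relevant, outputs a relevant element with probability at least $1-c^{-N}$, for some constant $c>1$, and let $T(N)$ be its running time. Then for every $k$ there exists an algorithm that solves FT-Retrieval$(k)$ on $n$ elements with high probability in time $O\left(\frac{n}{k}\log n\right) + T(m)$ for some $m=\Theta(\log n)$.
   Context: FT-Retrieval$(k)$: the input is a collection $S$ of $n$ elements, $k$ of which are relevant. Information can only be obtained by querying an oracle with an element $x$; it reports whether $x$ is relevant, and each answer is wrong with probability at most $p$, where $p\in[0,\tfrac12)$ is a fixed constant, independently of all other answers (repeated queries are also independent). Each query takes $O(1)$ time. The goal is to output a relevant element; solving it with high probability means succeeding with probability at least $1-\frac1n$ on every input. Inputs may be multisets (copies treated as distinct elements). *)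

theory Defs
  imports "HOL-Probability.Probability"
begin

text \<open>The input consists of n elements, identified by
their positions 0..n-1 (so copies in a multiset are distinct).  An algorithm is a finite
decision tree: it may query the noisy oracle about an element, draw a uniformly random
number from {0..<m} (unit cost, word-RAM style), or return an element.\<close>

datatype alg =
    Ret nat
  | Query nat "bool \<Rightarrow> alg"
  | Rand nat "nat \<Rightarrow> alg"

text \<open>Output distribution. R is the set of relevant positions, err x \<in> [0,p] is the
probability that a query on x is answered wrongly (independently for every query).
Rand 0 is treated as Rand 1.\<close>

primrec run :: "nat set \<Rightarrow> (nat \<Rightarrow> real) \<Rightarrow> alg \<Rightarrow> nat pmf" where
  "run R err (Ret i) = return_pmf i"
| "run R err (Query x f) =
     bind_pmf (bernoulli_pmf (err x))
       (\<lambda>wrong. run R err (f (if wrong then x \<notin> R else x \<in> R)))"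
| "run R err (Rand m f) =
     bind_pmf (pmf_of_set {..<max 1 m}) (\<lambda>j. run R err (f j))"

primrec time :: "alg \<Rightarrow> nat" where
  "time (Ret i) = 0"
| "time (Query x f) = Suc (max (time (f True)) (time (f False)))"
| "time (Rand m f) = Suc (Max ((\<lambda>j. time (f j)) ` {..<max 1 m}))"

definition valid_noise :: "real \<Rightarrow> (nat \<Rightarrow> real) \<Rightarrow> bool" where
  "valid_noise p err \<longleftrightarrow> (\<forall>x. 0 \<le> err x \<and> err x \<le> p)"

definition succ_prob :: "nat set \<Rightarrow> (nat \<Rightarrow> real) \<Rightarrow> alg \<Rightarrow> real" where
  "succ_prob R err B = measure_pmf.prob (run R err B) R"

end

theory Submission
  imports Defs
begin

lemma prob_bind_pmf:
  "measure_pmf.prob (bind_pmf M f) X = (\<integral>x. measure_pmf.prob (f x) X \<partial>M)"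
proof -
  have "ennreal (measure_pmf.prob (bind_pmf M f) X) = emeasure (bind_pmf M f) X"
    by (simp add: measure_pmf.emeasure_eq_measure)
  also have "\<dots> = (\<integral>\<^sup>+x. emeasure (f x) X \<partial>M)"
    by (rule emeasure_bind_pmf)
  also have "\<dots> = (\<integral>\<^sup>+x. ennreal (measure_pmf.prob (f x) X) \<partial>M)"
    by (simp add: measure_pmf.emeasure_eq_measure)
  also have "\<dots> = ennreal (\<integral>x. measure_pmf.prob (f x) X \<partial>M)"
    by (rule nn_integral_eq_integral)
       (auto intro!: measure_pmf.integrable_const_bound[where B=1])
  finally show ?thesis
    by (simp add: integral_nonneg)
qed

primrec abind :: "alg \<Rightarrow> (nat \<Rightarrow> alg) \<Rightarrow> alg" where
  "abind (Ret i) g = g i"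
| "abind (Query x f) g = Query x (\<lambda>b. abind (f b) g)"
| "abind (Rand m f) g = Rand m (\<lambda>j. abind (f j) g)"

lemma run_abind: "run R err (abind t g) = bind_pmf (run R err t) (\<lambda>i. run R err (g i))"
  by (induction t) (auto simp: bind_assoc_pmf bind_return_pmf)

lemma time_abind: "(\<And>i. time (g i) \<le> T) \<Longrightarrow> time (abind t g) \<le> time t + T"
proof (induction t)
  case (Ret i) then show ?case by simp
next
  case (Query x f)
  have a: "\<And>b. time (abind (f b) g) \<le> time (f b) + T" using Query by auto
  show ?case using a[of True] a[of False] by (auto simp: max_def)
next
  case (Rand m f)
  have "(0::nat) \<in> {..<max 1 m}" by simp
  then have ne: "{..<max 1 m} \<noteq> {}" by blast
  have pt: "time (abind (f j) g) \<le> Max ((\<lambda>j. time (f j)) ` {..<max 1 m}) + T" if j: "j < max 1 m" for j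
  proof -
    have "time (abind (f j) g) \<le> time (f j) + T" using Rand by auto
    also have "time (f j) \<le> Max ((\<lambda>j. time (f j)) ` {..<max 1 m})"
      using j by (intro Max_ge) auto
    finally show ?thesis by simp
  qed
  have "Max ((\<lambda>j. time (abind (f j) g)) ` {..<max 1 m}) \<le> Max ((\<lambda>j. time (f j)) ` {..<max 1 m}) + T"
    using pt ne by (subst Max_le_iff) auto
  then show ?case by simp
qed

lemma succ_Ret: "succ_prob R err (Ret i) = (if i \<in> R then 1 else 0)"
  by (simp add: succ_prob_def)

lemma succ_Query:
  assumes "0 \<le> err x" "err x \<le> 1"
  shows "succ_prob R err (Query x f) =
     err x * succ_prob R err (f (x \<notin> R)) + (1 - err x) * succ_prob R err (f (x \<in> R))"
  using assms by (simp add: succ_prob_def prob_bind_pmf)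

lemma succ_Rand:
  "succ_prob R err (Rand m f) = (\<Sum>j<max 1 m. succ_prob R err (f j)) / real (max 1 m)"
proof -
  have "(0::nat) \<in> {..<max 1 m}" by simp
  then have ne: "{..<max 1 m} \<noteq> {}" by blast
  show ?thesis
    by (simp only: succ_prob_def run.simps prob_bind_pmf integral_pmf_of_set[OF ne finite_lessThan] card_lessThan)
qed

lemma succ_nonneg: "0 \<le> succ_prob R err t"
  by (simp add: succ_prob_def)

lemma succ_le1: "succ_prob R err t \<le> 1"
  by (simp add: succ_prob_def)

primrec trial :: "nat \<Rightarrow> nat \<Rightarrow> nat \<Rightarrow> nat \<Rightarrow> nat \<Rightarrow> alg" where
  "trial n H 0 x pos = Ret n"
| "trial n H (Suc b) x pos = (if pos = 0 then Rand n (\<lambda>y. trial n H b y 1)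
     else Query x (\<lambda>ans. if ans then (if Suc pos = H then Ret x else trial n H b x (Suc pos))
                         else trial n H b x (pos - 1)))"

lemma time_trial: "time (trial n H b x pos) \<le> b"
proof (induction b arbitrary: x pos)
  case 0 then show ?case by simp
next
  case (Suc b)
  show ?case
  proof (cases "pos = 0")
    case True
    have "(0::nat) \<in> {..<max 1 n}" by simp
    then have ne: "{..<max 1 n} \<noteq> {}" by blast
    have "Max ((\<lambda>j. time (trial n H b j 1)) ` {..<max 1 n}) \<le> b"
      using Suc ne by (subst Max_le_iff) auto
    then show ?thesis using True by simp
  next
    case False
    then show ?thesis using Suc by simp
  qed
qed

lemma sum_split_R:
  assumes "R \<subseteq> {..<n}"
  shows "(\<Sum>y<n. if y \<in> R then a else b) = real (card R) * a + real (n - card R) * (b::real)"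
proof -
  have "(\<Sum>y<n. if y \<in> R then a else b) = (\<Sum>y\<in>{..<n} \<inter> {y. y \<in> R}. a) + (\<Sum>y\<in>{..<n} \<inter> - {y. y \<in> R}. b)"
    by (rule sum.If_cases) simp
  also have "{..<n} \<inter> {y. y \<in> R} = R" using assms by auto
  also have "{..<n} \<inter> - {y. y \<in> R} = {..<n} - R" by auto
  finally have e: "(\<Sum>y<n. if y \<in> R then a else b) = (\<Sum>y\<in>R. a) + (\<Sum>y\<in>{..<n} - R. b)" .
  have "card ({..<n} - R) = n - card R" using assms by (simp add: card_Diff_subset finite_subset)
  then show ?thesis using e by simp
qed

locale tset =
  fixes n k :: nat and R :: "nat set" and err :: "nat \<Rightarrow> real" and p :: real and H :: nat
  assumes R_sub: "R \<subseteq> {..<n}" and cardR: "card R = k" and k1: "1 \<le> k" and kn: "k \<le> n"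
    and err0: "\<And>x. 0 \<le> err x" and errp: "\<And>x. err x \<le> p" and p2: "p < 1/2" and H2: "2 \<le> H"
begin

definition "\<rho> = 1/(2*(1-p))"
definition "cc = 1/(1-2*p)"
definition "\<phi>0 = real n * \<rho>^(H-1) / (real k * (1-\<rho>))"
definition "w0 = (real n*(1+cc) + real k*cc*real H)/(real k*(1-\<rho>))"
definition "\<Phi> x pos = (if pos = 0 then \<phi>0 else if x \<in> R then \<phi>0*\<rho>^pos else \<phi>0 + \<rho>^(H-pos))"
definition "Wf x pos = (if pos = 0 then w0 else if x \<in> R then cc*real(H-pos) + w0*\<rho>^pos else w0 + cc*real pos)"

lemma p0: "0 \<le> p" using err0[of 0] errp[of 0] by linarith

lemma rho_pos: "0 < \<rho>"
  using p2 by (simp add: \<rho>_def)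

lemma rho_lt1: "\<rho> < 1"
proof -
  have "1 < 2*(1-p)" using p2 by simp
  then show ?thesis unfolding \<rho>_def by simp
qed

lemma cc_ge1: "1 \<le> cc"
proof -
  have "0 < 1-2*p" "1-2*p \<le> 1" using p0 p2 by auto
  then show ?thesis unfolding cc_def by simp
qed

lemma key: assumes "0 \<le> e" "e \<le> p" shows "e + (1-e)*\<rho>^2 \<le> \<rho>"
proof -
  have q: "0 < 1 - p" using p2 by linarith
  have pp: "p*(4*(1-p)^2-1) \<le> 1-2*p"
  proof -
    have "p*(4*(1-p)^2 - 1) = (1-2*p)*(p*(3-2*p))" by (simp add: algebra_simps power2_eq_square)
    also have "\<dots> \<le> (1-2*p)*1"
    proof (rule mult_left_mono)
      have "0 \<le> (1-2*p)*(1-p)" using p2 q by simp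
      then show "p*(3-2*p) \<le> 1" by (simp add: algebra_simps)
    qed (use p2 in simp)
    finally show ?thesis by simp
  qed
  have "0 \<le> 4*(1-p)^2-1"
  proof -
    have "1 \<le> 2*(1-p)" using p2 by simp
    then have "1*1 \<le> (2*(1-p))*(2*(1-p))" by (intro mult_mono) auto
    then show ?thesis by (simp add: power2_eq_square algebra_simps)
  qed
  then have "e*(4*(1-p)^2-1) \<le> p*(4*(1-p)^2-1)" using assms by (intro mult_right_mono) auto
  with pp have h1: "e*(4*(1-p)^2-1) \<le> 1-2*p" by linarith
  have r: "\<rho> = 1/(2*(1-p))" by (simp add: \<rho>_def)
  have r1: "\<rho>*(2*(1-p)) = 1" using q by (simp add: r)
  have r2: "\<rho>^2*(4*(1-p)^2) = 1"
  proof -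
    have e4: "(2*(1-p))^2 = 4*(1-p)^2" by (simp add: power2_eq_square algebra_simps)
    have "(\<rho>*(2*(1-p)))^2 = \<rho>^2*(2*(1-p))^2" by (rule power_mult_distrib)
    then have "(\<rho>*(2*(1-p)))^2 = \<rho>^2*(4*(1-p)^2)" using e4 by simp
    then show ?thesis using r1 by simp
  qed
  have "(e + (1-e)*\<rho>^2) * (4*(1-p)^2) = e*(4*(1-p)^2) + (1-e)*(\<rho>^2*(4*(1-p)^2))"
    by (simp add: algebra_simps)
  also have "\<dots> = e*(4*(1-p)^2) + (1-e)" by (simp add: r2)
  also have "\<dots> \<le> 2*(1-p)" using h1 by (simp add: algebra_simps)
  also have "\<dots> = (\<rho>*(2*(1-p))) * (2*(1-p))" using r1 by simp
  also have "\<dots> = \<rho> * (4*(1-p)^2)" by (simp add: power2_eq_square algebra_simps)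
  finally have "(e + (1-e)*\<rho>^2) * (4*(1-p)^2) \<le> \<rho> * (4*(1-p)^2)" .
  moreover have "0 < 4*(1-p)^2" using q by simp
  ultimately show ?thesis by (rule mult_right_le_imp_le)
qed


lemma phi0_nonneg: "0 \<le> \<phi>0"
  using rho_pos rho_lt1 k1 by (simp add: \<phi>0_def)

lemma kphi: "real k * \<phi>0 * (1-\<rho>) = real n * \<rho>^(H-1)"
  using rho_lt1 k1 by (simp add: \<phi>0_def)

lemma kw: "real k * w0 * (1-\<rho>) = real n*(1+cc) + real k*cc*real H"
  using rho_lt1 k1 by (simp add: w0_def)

lemma w0_ge1: "1 \<le> w0"
proof -
  have "real k * (1-\<rho>) \<le> real n*(1+cc) + real k*cc*real H"
  proof -
    have "real k * (1-\<rho>) \<le> real k" using rho_pos k1 by simp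
    also have "\<dots> \<le> real n" using kn by simp
    also have "\<dots> \<le> real n*(1+cc)"
    proof -
      have "0 \<le> real n * cc" using cc_ge1 by simp
      then show ?thesis by (simp add: algebra_simps)
    qed
    also have "\<dots> \<le> real n*(1+cc) + real k*cc*real H" using cc_ge1 by simp
    finally show ?thesis .
  qed
  moreover have "0 < real k * (1-\<rho>)" using rho_lt1 k1 by simp
  ultimately show ?thesis unfolding w0_def by simp
qed

lemma Phi_nonneg: "0 \<le> \<Phi> x pos"
  using phi0_nonneg rho_pos by (simp add: \<Phi>_def)

lemma Wf_ge1: "pos < H \<Longrightarrow> 1 \<le> Wf x pos"
proof -
  assume a: "pos < H"
  have "1 \<le> real (H-pos)" using a by simp
  then have f1: "1*1 \<le> cc*real(H-pos)" using cc_ge1 by (intro mult_mono) auto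
  have f2: "0 \<le> w0*\<rho>^pos" using w0_ge1 rho_pos by simp
  have f3: "0 \<le> cc*real pos" using cc_ge1 by simp
  show ?thesis
  proof (cases "pos = 0")
    case True then show ?thesis using w0_ge1 by (simp add: Wf_def)
  next
    case False
    show ?thesis
    proof (cases "x \<in> R")
      case True
      have "Wf x pos = cc*real(H-pos) + w0*\<rho>^pos" using True False by (simp add: Wf_def)
      then show ?thesis using f1 f2 by linarith
    next
      case F: False
      have "Wf x pos = w0 + cc*real pos" using F False by (simp add: Wf_def)
      then show ?thesis using w0_ge1 f3 by linarith
    qed
  qed
qed

lemma comb:
  fixes e F1 F2 P1 P2 W1 W2 P W :: real and b :: nat
  assumes "0\<le>e" "e\<le>1" "F1 \<le> P1 + W1/b" "F2 \<le> P2 + W2/b"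
    "e*P1 + (1-e)*P2 \<le> P" "e*W1 + (1-e)*W2 \<le> W - 1" "1 \<le> b" "W \<le> real b+1"
  shows "e*F1 + (1-e)*F2 \<le> P + W/(Suc b)"
proof -
  have "e*F1 + (1-e)*F2 \<le> e*(P1 + W1/b) + (1-e)*(P2+W2/b)"
    using assms by (intro add_mono mult_left_mono) auto
  also have "\<dots> = (e*P1+(1-e)*P2) + (e*W1+(1-e)*W2)/b" using assms(7) by (simp add: field_simps)
  also have "\<dots> \<le> P + (W-1)/b"
    using assms by (intro add_mono divide_right_mono) auto
  also have "(W-1)/b \<le> W/(Suc b)"
  proof -
    have "(W-1)*(real b+1) \<le> W * real b" using assms by (simp add: algebra_simps)
    then show ?thesis using assms by (simp add: field_simps)
  qed
  finally show ?thesis by simp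
qed



lemma Wf_nonneg: "0 \<le> Wf x pos"
  using w0_ge1 rho_pos cc_ge1 by (simp add: Wf_def)

lemma cc_e: assumes "0 \<le> e" "e \<le> p" shows "1 \<le> cc*(1-2*e)"
proof -
  have "cc*(1-2*p) = 1" using p2 by (simp add: cc_def)
  moreover have "cc*(1-2*p) \<le> cc*(1-2*e)" using assms cc_ge1 by (intro mult_left_mono) auto
  ultimately show ?thesis by simp
qed

lemma key_pow: assumes "0 \<le> e" "e \<le> p" shows "e*\<rho>^q + (1-e)*\<rho>^(Suc (Suc q)) \<le> \<rho>^(Suc q)"
proof -
  have "\<rho>^q*(e + (1-e)*\<rho>^2) \<le> \<rho>^q*\<rho>" using key[OF assms] rho_pos by (intro mult_left_mono) auto
  then show ?thesis by (simp add: algebra_simps power2_eq_square)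
qed

lemma rand_arith:
  fixes b :: nat
  assumes b1: "1 \<le> b"
  shows "(real k * (\<phi>0*\<rho> + (cc*(real H - 1) + w0*\<rho>)/b) + real (n-k) * ((\<phi>0 + \<rho>^(H-1)) + (w0 + cc)/b)) / real n
     \<le> \<phi>0 + (w0-1)/b"
proof -
  have n0: "0 < real n" using k1 kn by simp
  have nk: "real (n-k) = real n - real k" using kn by simp
  have A: "real k * (\<phi>0*\<rho>) + real (n-k) * (\<phi>0 + \<rho>^(H-1)) \<le> real n * \<phi>0"
  proof -
    have "real (n-k) * \<rho>^(H-1) \<le> real n * \<rho>^(H-1)" using rho_pos by (intro mult_right_mono) auto
    then show ?thesis using kphi unfolding nk by (simp add: algebra_simps)
  qed
  have B: "real k * (cc*(real H - 1) + w0*\<rho>) + real (n-k) * (w0 + cc) \<le> real n * (w0 - 1)"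
  proof -
    have "real k * cc \<ge> 0" using cc_ge1 by simp
    then show ?thesis using kw unfolding nk by (simp add: algebra_simps)
  qed
  have "real k * (\<phi>0*\<rho> + (cc*(real H - 1) + w0*\<rho>)/b) + real (n-k) * ((\<phi>0 + \<rho>^(H-1)) + (w0 + cc)/b)
     = (real k * (\<phi>0*\<rho>) + real (n-k) * (\<phi>0 + \<rho>^(H-1)))
       + (real k * (cc*(real H - 1) + w0*\<rho>) + real (n-k) * (w0 + cc)) / b"
    using b1 by (simp add: field_simps)
  also have "\<dots> \<le> real n * \<phi>0 + real n * (w0 - 1) / b"
    using A B b1 by (intro add_mono divide_right_mono) auto
  finally show ?thesis using n0 by (simp add: field_simps)
qed

lemma trial_fail:
  "1 \<le> b \<Longrightarrow> pos < H \<Longrightarrow> 1 - succ_prob R err (trial n H b x pos) \<le> \<Phi> x pos + Wf x pos / real b"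
proof (induction b arbitrary: x pos)
  case 0 then show ?case by simp
next
  case (Suc b)
  note IH = Suc.IH
  show ?case
  proof (cases "Wf x pos \<ge> real (Suc b)")
    case True
    have "1 \<le> Wf x pos / real (Suc b)" using True by simp
    then show ?thesis using Phi_nonneg[of x pos] succ_nonneg[of R err "trial n H (Suc b) x pos"] by linarith
  next
    case False
    hence Wlt: "Wf x pos \<le> real b + 1" by simp
    have b1: "1 \<le> b" using Wf_ge1[OF Suc.prems(2), of x] False by simp
    show ?thesis
    proof (cases "pos = 0")
      case True
      have nmax: "max 1 n = n" using k1 kn by simp
      have n0: "0 < n" using k1 kn by simp
      have tr: "trial n H (Suc b) x pos = Rand n (\<lambda>y. trial n H b y 1)" using True by simp
      have s: "succ_prob R err (trial n H (Suc b) x pos) = (\<Sum>y<n. succ_prob R err (trial n H b y 1)) / real n"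
        using tr succ_Rand[of R err n] nmax by simp
      define G where "G y = (if y \<in> R then \<phi>0*\<rho> + (cc*(real H - 1) + w0*\<rho>)/b
                           else (\<phi>0 + \<rho>^(H-1)) + (w0 + cc)/b)" for y
      have each: "1 - succ_prob R err (trial n H b y 1) \<le> G y" for y
      proof -
        have "1 - succ_prob R err (trial n H b y 1) \<le> \<Phi> y 1 + Wf y 1 / b" using IH[OF b1, of 1 y] H2 by simp
        moreover have hh: "real (H - Suc 0) = real H - 1" using H2 by simp
        ultimately show ?thesis by (cases "y \<in> R") (simp_all add: \<Phi>_def Wf_def G_def hh)
      qed
      have "1 - succ_prob R err (trial n H (Suc b) x pos) = (\<Sum>y<n. 1 - succ_prob R err (trial n H b y 1)) / real n"
        using n0 unfolding s by (simp add: sum_subtractf divide_simps)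
      also have "\<dots> \<le> (\<Sum>y<n. G y) / real n"
        by (intro divide_right_mono sum_mono each) simp
      also have "(\<Sum>y<n. G y) = real k * (\<phi>0*\<rho> + (cc*(real H - 1) + w0*\<rho>)/b) + real (n-k) * ((\<phi>0 + \<rho>^(H-1)) + (w0 + cc)/b)"
        unfolding G_def using sum_split_R[OF R_sub] cardR by simp
      also have "\<dots> / real n \<le> \<phi>0 + (w0-1)/b" by (rule rand_arith[OF b1])
      also have "(w0-1)/b \<le> w0/(Suc b)"
      proof -
        have "w0 \<le> real b + 1" using Wlt True by (simp add: Wf_def)
        then have "(w0-1)*(real b+1) \<le> w0 * real b" by (simp add: algebra_simps)
        then show ?thesis using b1 by (simp add: field_simps)
      qed
      finally show ?thesis using True by (simp add: \<Phi>_def Wf_def)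
    next
      case False
      then obtain q where q: "pos = Suc q" by (cases pos) auto
      have e0: "0 \<le> err x" and ep: "err x \<le> p" using err0 errp by auto
      have e1: "err x \<le> 1" using ep p2 by simp
      define g where "g = (\<lambda>ans. if ans then (if Suc pos = H then Ret x else trial n H b x (Suc pos)) else trial n H b x (pos - 1))"
      have tr: "trial n H (Suc b) x pos = Query x g" using False by (simp add: g_def)
      have sq: "succ_prob R err (Query x g) = err x * succ_prob R err (g (x \<notin> R)) + (1 - err x) * succ_prob R err (g (x \<in> R))"
        by (rule succ_Query[of err x, OF e0 e1])
      have fNo: "1 - succ_prob R err (g False) \<le> \<Phi> x q + Wf x q / b"
        using IH[OF b1, of q x] Suc.prems q by (simp add: g_def)
      have fYes: "1 - succ_prob R err (g True) \<le> \<Phi> x (Suc pos) + Wf x (Suc pos) / b"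
      proof (cases "Suc pos = H")
        case True
        have "0 \<le> Wf x (Suc pos) / b" using Wf_nonneg by simp
        moreover have "1 - succ_prob R err (g True) \<le> \<Phi> x (Suc pos)"
          using True phi0_nonneg rho_pos by (simp add: g_def succ_Ret \<Phi>_def)
        ultimately show ?thesis by linarith
      next
        case F: False
        then show ?thesis using IH[OF b1, of "Suc pos" x] Suc.prems by (simp add: g_def)
      qed
      have hq: "Suc (Suc q) \<le> H" using Suc.prems q by simp
      have ce: "1 \<le> cc*(1-2*err x)" by (rule cc_e[OF e0 ep])
      show ?thesis
      proof (cases "x \<in> R")
        case True
        have fail: "1 - succ_prob R err (trial n H (Suc b) x pos) = err x * (1 - succ_prob R err (g False)) + (1 - err x) * (1 - succ_prob R err (g True))"
          unfolding tr sq using True by (simp add: algebra_simps)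
        have P1: "\<Phi> x q = \<phi>0*\<rho>^q" using True by (simp add: \<Phi>_def)
        have P2: "\<Phi> x (Suc pos) = \<phi>0*\<rho>^(Suc (Suc q))" using True q by (simp add: \<Phi>_def)
        have P: "\<Phi> x pos = \<phi>0*\<rho>^(Suc q)" using True q by (simp add: \<Phi>_def)
        have Pc: "err x * \<Phi> x q + (1 - err x) * \<Phi> x (Suc pos) \<le> \<Phi> x pos"
        proof -
          have "\<phi>0*(err x*\<rho>^q + (1-err x)*\<rho>^(Suc (Suc q))) \<le> \<phi>0*\<rho>^(Suc q)"
            using key_pow[OF e0 ep, of q] phi0_nonneg by (intro mult_left_mono) auto
          then show ?thesis unfolding P1 P2 P by (simp add: algebra_simps)
        qed
        define h where "h = real (H - Suc q)"
        have h1: "real (H - q) = h + 1" and h2: "real (H - Suc (Suc q)) = h - 1" and h0: "real H = h + real (Suc q)"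
          using hq by (simp_all add: h_def of_nat_diff)
        have W1: "Wf x q \<le> cc*(h+1) + w0*\<rho>^q"
        proof (cases "q = 0")
          case True
          have "0 \<le> cc*(h+1)" using cc_ge1 hq by (simp add: h_def)
          then show ?thesis using True by (simp add: Wf_def)
        next
          case False then show ?thesis using True h1 by (simp add: Wf_def)
        qed
        have W2: "Wf x (Suc pos) = cc*(h-1) + w0*\<rho>^(Suc (Suc q))" using True q h2 by (simp add: Wf_def)
        have W: "Wf x pos = cc*h + w0*\<rho>^(Suc q)" using True q by (simp add: Wf_def h_def)
        have Wc: "err x * Wf x q + (1 - err x) * Wf x (Suc pos) \<le> Wf x pos - 1"
        proof -
          have "err x * Wf x q \<le> err x * (cc*(h+1) + w0*\<rho>^q)" using W1 e0 by (rule mult_left_mono)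
          moreover have "w0*(err x*\<rho>^q + (1-err x)*\<rho>^(Suc (Suc q))) \<le> w0*\<rho>^(Suc q)"
            using key_pow[OF e0 ep, of q] w0_ge1 by (intro mult_left_mono) auto
          ultimately show ?thesis unfolding W2 W using ce by (simp add: algebra_simps)
        qed
        show ?thesis unfolding fail
          by (rule comb[OF e0 e1 fNo fYes Pc Wc b1 Wlt])
      next
        case False
        have fail: "1 - succ_prob R err (trial n H (Suc b) x pos) = err x * (1 - succ_prob R err (g True)) + (1 - err x) * (1 - succ_prob R err (g False))"
          unfolding tr sq using False by (simp add: algebra_simps)
        define j where "j = H - Suc (Suc q)"
        have j1: "H - q = Suc (Suc j)" "H - Suc q = Suc j" using hq by (simp_all add: j_def)
        have P1: "\<Phi> x (Suc pos) = \<phi>0 + \<rho>^j" using False q by (simp add: \<Phi>_def j_def)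
        have P2: "\<Phi> x q \<le> \<phi>0 + \<rho>^(Suc (Suc j))"
        proof (cases "q = 0")
          case True
          have "0 \<le> \<rho>^(Suc (Suc j))" using rho_pos by simp
          then show ?thesis using True by (simp add: \<Phi>_def del: power_Suc)
        next
          case F2: False
          show ?thesis using False F2 j1(1) by (simp add: \<Phi>_def del: power_Suc)
        qed
        have P: "\<Phi> x pos = \<phi>0 + \<rho>^(Suc j)" using False q j1 by (simp add: \<Phi>_def)
        have Pc: "err x * \<Phi> x (Suc pos) + (1 - err x) * \<Phi> x q \<le> \<Phi> x pos"
        proof -
          have "(1 - err x) * \<Phi> x q \<le> (1 - err x) * (\<phi>0 + \<rho>^(Suc (Suc j)))"
            using P2 e1 by (intro mult_left_mono) auto
          then show ?thesis unfolding P1 P using key_pow[OF e0 ep, of j] by (simp add: algebra_simps)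
        qed
        have W1: "Wf x (Suc pos) = w0 + cc*(real q + 2)" using False q by (simp add: Wf_def)
        have W2: "Wf x q = w0 + cc*real q" using False by (simp add: Wf_def)
        have W: "Wf x pos = w0 + cc*(real q + 1)" using False q by (simp add: Wf_def)
        have Wc: "err x * Wf x (Suc pos) + (1 - err x) * Wf x q \<le> Wf x pos - 1"
          unfolding W1 W2 W using ce by (simp add: algebra_simps)
        show ?thesis unfolding fail
          by (rule comb[OF e0 e1 fYes fNo Pc Wc b1 Wlt])
      qed
    qed
  qed
qed

end


primrec relab :: "nat list \<Rightarrow> alg \<Rightarrow> alg" where
  "relab cs (Ret i) = Ret (if i < length cs then cs!i else 0)"
| "relab cs (Query x f) = (if x < length cs then Query (cs!x) (\<lambda>b. relab cs (f b)) else relab cs (f False))"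
| "relab cs (Rand m f) = Rand m (\<lambda>j. relab cs (f j))"

lemma time_relab: "time (relab cs t) \<le> time t"
proof (induction t)
  case (Ret i) then show ?case by simp
next
  case (Query x f)
  have a: "\<And>b. time (relab cs (f b)) \<le> time (f b)" using Query by auto
  show ?case using a[of True] a[of False] by (auto simp: max_def)
next
  case (Rand m f)
  have "(0::nat) \<in> {..<max 1 m}" by simp
  then have ne: "{..<max 1 m} \<noteq> {}" by blast
  have pt: "time (relab cs (f j)) \<le> Max ((\<lambda>j. time (f j)) ` {..<max 1 m})" if j: "j < max 1 m" for j
  proof -
    have "time (relab cs (f j)) \<le> time (f j)" using Rand by auto
    also have "time (f j) \<le> Max ((\<lambda>j. time (f j)) ` {..<max 1 m})"
      using j by (intro Max_ge) auto
    finally show ?thesis .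
  qed
  have "Max ((\<lambda>j. time (relab cs (f j))) ` {..<max 1 m}) \<le> Max ((\<lambda>j. time (f j)) ` {..<max 1 m})"
    using pt ne by (subst Max_le_iff) auto
  then show ?case by simp
qed

lemma run_relab:
  "run R err (relab cs t) = map_pmf (\<lambda>i. if i < length cs then cs!i else 0)
     (run {i. i < length cs \<and> cs!i \<in> R} (\<lambda>i. if i < length cs then err (cs!i) else 0) t)"
proof (induction t)
  case (Ret i) then show ?case by simp
next
  case (Query x f)
  show ?case
  proof (cases "x < length cs")
    case True
    have mem: "(x \<in> {i. i < length cs \<and> cs!i \<in> R}) = (cs!x \<in> R)" using True by simp
    show ?thesis using Query True by (simp add: map_bind_pmf mem cong: if_cong)
  next
    case False
    have "bernoulli_pmf 0 = return_pmf False"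
      apply (rule pmf_eqI)
      subgoal for i by (cases i) auto
      done
    then show ?thesis using Query False by (simp add: bind_return_pmf)
  qed
next
  case (Rand m f) then show ?case by (simp add: map_bind_pmf)
qed

lemma succ_relab:
  "succ_prob R err (relab cs t) \<ge> succ_prob {i. i < length cs \<and> cs!i \<in> R} (\<lambda>i. if i < length cs then err (cs!i) else 0) t"
proof -
  let ?g = "\<lambda>i. if i < length cs then cs!i else 0"
  let ?M = "run {i. i < length cs \<and> cs!i \<in> R} (\<lambda>i. if i < length cs then err (cs!i) else 0) t"
  have "succ_prob R err (relab cs t) = measure_pmf.prob ?M (?g -` R)"
    by (simp add: succ_prob_def run_relab)
  moreover have "measure_pmf.prob ?M {i. i < length cs \<and> cs!i \<in> R} \<le> measure_pmf.prob ?M (?g -` R)"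
    by (rule measure_pmf.finite_measure_mono) auto
  ultimately show ?thesis by (simp add: succ_prob_def)
qed

lemma exp_two:
  fixes M :: "nat pmf" and f :: "nat \<Rightarrow> real"
  assumes "\<And>x. f x \<ge> (if x \<in> R then \<alpha> else \<beta>)" "\<And>x. 0 \<le> f x" "\<And>x. f x \<le> 1"
  shows "measure_pmf.expectation M f \<ge> \<alpha> * measure_pmf.prob M R + \<beta> * (1 - measure_pmf.prob M R)"
proof -
  have eq: "(\<lambda>x. if x \<in> R then \<alpha> else \<beta>) = (\<lambda>x. \<beta> + (\<alpha> - \<beta>) * indicator R x)"
    by (auto simp: fun_eq_iff indicator_def)
  have ii: "integrable M (\<lambda>x. if x \<in> R then \<alpha> else \<beta>)"
    by (rule measure_pmf.integrable_const_bound[where B="\<bar>\<alpha>\<bar> + \<bar>\<beta>\<bar>"]) auto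
  have "measure_pmf.expectation M (\<lambda>x. if x \<in> R then \<alpha> else \<beta>) = \<beta> + (\<alpha> - \<beta>) * measure_pmf.prob M R"
  proof -
    have i1: "integrable M (\<lambda>x. \<beta>)"
      by (rule measure_pmf.integrable_const_bound[where B="\<bar>\<beta>\<bar>"]) auto
    have i2: "integrable M (\<lambda>x. (\<alpha> - \<beta>) * indicator R x)"
      by (rule measure_pmf.integrable_const_bound[where B="\<bar>\<alpha> - \<beta>\<bar>"]) (auto simp: abs_mult indicator_def)
    have "measure_pmf.expectation M (\<lambda>x. \<beta> + (\<alpha> - \<beta>) * indicator R x)
       = measure_pmf.expectation M (\<lambda>x. \<beta>) + measure_pmf.expectation M (\<lambda>x. (\<alpha> - \<beta>) * indicator R x)"
      by (rule Bochner_Integration.integral_add[OF i1 i2])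
    also have "measure_pmf.expectation M (\<lambda>x. \<beta>) = \<beta>" by (simp add: measure_pmf.prob_space)
    also have "measure_pmf.expectation M (\<lambda>x. (\<alpha> - \<beta>) * indicator R x) = (\<alpha> - \<beta>) * measure_pmf.prob M R"
      by simp
    finally show ?thesis unfolding eq .
  qed
  moreover have "measure_pmf.expectation M (\<lambda>x. if x \<in> R then \<alpha> else \<beta>) \<le> measure_pmf.expectation M f"
    by (rule integral_mono[OF ii measure_pmf.integrable_const_bound[where B=1]]) (use assms in auto)
  ultimately show ?thesis by (simp add: algebra_simps)
qed

lemma succ_abind: "succ_prob R err (abind T g) = measure_pmf.expectation (run R err T) (\<lambda>i. succ_prob R err (g i))"
  by (simp add: succ_prob_def run_abind prob_bind_pmf)

primrec collect :: "alg \<Rightarrow> (nat list \<Rightarrow> alg) \<Rightarrow> nat \<Rightarrow> nat list \<Rightarrow> alg" where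
  "collect T F 0 xs = F xs"
| "collect T F (Suc j) xs = abind T (\<lambda>x. collect T F j (xs @ [x]))"

lemma time_collect:
  assumes "\<And>ys. time (F ys) \<le> TF"
  shows "time (collect T F j xs) \<le> j * time T + TF"
proof (induction j arbitrary: xs)
  case 0 then show ?case using assms by simp
next
  case (Suc j)
  have "time (collect T F (Suc j) xs) \<le> time T + (j * time T + TF)"
    using Suc by (simp add: time_abind)
  then show ?case by simp
qed

definition nf :: "nat set \<Rightarrow> nat list \<Rightarrow> nat" where
  "nf R ys = length (filter (\<lambda>x. x \<notin> R) ys)"

lemma succ_collect:
  fixes \<gamma> :: real
  assumes T: "1 - succ_prob R err T \<le> 1/32"
    and F: "\<And>ys. length ys = M \<Longrightarrow> succ_prob R err (F ys) \<ge> 1 - \<gamma> - 16^(nf R ys) / 2^M"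
  shows "length xs + j = M \<Longrightarrow> succ_prob R err (collect T F j xs) \<ge> 1 - \<gamma> - 16^(nf R xs) * (3/2)^j / 2^M"
proof (induction j arbitrary: xs)
  case 0 then show ?case using F by simp
next
  case (Suc j)
  define Z where "Z = 16^(nf R xs) * (3/2)^j / (2^M :: real)"
  have Z0: "0 \<le> Z" by (simp add: Z_def)
  have each: "succ_prob R err (collect T F j (xs @ [x])) \<ge> (if x \<in> R then 1 - \<gamma> - Z else 1 - \<gamma> - 16 * Z)" for x
  proof -
    have "succ_prob R err (collect T F j (xs @ [x])) \<ge> 1 - \<gamma> - 16^(nf R (xs @ [x])) * (3/2)^j / 2^M"
      using Suc by simp
    then show ?thesis by (cases "x \<in> R") (simp_all add: nf_def Z_def)
  qed
  let ?P = "measure_pmf.prob (run R err T) R"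
  have P: "?P = succ_prob R err T" by (simp add: succ_prob_def)
  have "succ_prob R err (collect T F (Suc j) xs) = measure_pmf.expectation (run R err T) (\<lambda>x. succ_prob R err (collect T F j (xs @ [x])))"
    by (simp add: succ_abind)
  also have "\<dots> \<ge> (1 - \<gamma> - Z) * ?P + (1 - \<gamma> - 16 * Z) * (1 - ?P)"
    by (rule exp_two[OF each succ_nonneg succ_le1])
  finally have "succ_prob R err (collect T F (Suc j) xs) \<ge> (1 - \<gamma> - Z) - 15 * Z * (1 - ?P)"
    by (simp add: algebra_simps)
  moreover have "15 * Z * (1 - ?P) \<le> 15 * Z * (1/32)"
    using T P Z0 by (intro mult_left_mono) auto
  moreover have eqZ: "16^(nf R xs) * (3/2)^(Suc j) / (2^M :: real) = Z * (3/2)" by (simp add: Z_def)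
  ultimately show ?case unfolding eqZ using Z0 by linarith
qed

lemma tpow:
  fixes r :: real
  assumes "0 \<le> r" "2*r \<le> 1" "1 \<le> t"
  shows "real t * r^t \<le> 2*r"
  using assms(3)
proof (induction t rule: dec_induct)
  case base then show ?case using assms by simp
next
  case (step s)
  have s2: "real s + 1 \<le> 2 * real s" using step by simp
  have "real (Suc s) * r^(Suc s) = r * ((real s + 1) * r^s)" by (simp add: algebra_simps)
  also have "\<dots> \<le> r * ((2 * real s) * r^s)"
    using s2 assms by (intro mult_left_mono mult_right_mono) auto
  also have "\<dots> = r * (2 * (real s * r^s))" by simp
  also have "\<dots> \<le> r * (2 * (2*r))"
    using step assms by (intro mult_left_mono) auto
  also have "\<dots> \<le> 2*r"
  proof -
    have "(2*r)*(2*r) \<le> (2*r)*1" by (rule mult_left_mono) (use assms in auto)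
    then show ?thesis by (simp add: algebra_simps)
  qed
  finally show ?case .
qed

lemma trial_good:
  fixes n k a B1 :: nat and p :: real
  assumes R: "R \<subseteq> {..<n}" "card R = k" "1 \<le> k" "k \<le> n"
    and vn: "valid_noise p err" and p2: "p < 1/2"
    and a: "1 \<le> a" "(1/(2*(1-p)))^a \<le> (1 - 1/(2*(1-p)))/128"
    and B1: "64*((1 + 1/(1-2*p) + 1/(1-2*p)*(real a+1))/(1 - 1/(2*(1-p)))) \<le> real B1"
    and t: "t = nat \<lceil>real n / real k\<rceil>"
  shows "1 - succ_prob R err (trial n (a*t+1) (B1*t) 0 0) \<le> 1/32"
proof -
  have nk0: "0 < real n / real k" using R by simp
  have t1: "real n / real k \<le> real t" using t by linarith
  have t2: "1 \<le> t" using t nk0 by linarith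
  interpret T: tset n k R err p "a*t+1"
  proof
    have "1*1 \<le> a*t" using a t2 by (intro mult_le_mono) auto
    then show "2 \<le> a*t+1" by simp
  qed (use R vn p2 in \<open>auto simp: valid_noise_def\<close>)
  have rho: "T.\<rho> = 1/(2*(1-p))" by (simp add: T.\<rho>_def)
  have ccd: "T.cc = 1/(1-2*p)" by (simp add: T.cc_def)
  have r0: "0 < T.\<rho>" "T.\<rho> < 1" using T.rho_pos T.rho_lt1 .
  have K0: "0 < 1 - T.\<rho>" using r0 by simp
  have B1pos: "1 \<le> B1"
  proof -
    have "0 \<le> T.cc*(real a+1)" using T.cc_ge1 by simp
    then have "0 < 1 + T.cc + T.cc*(real a+1)" using T.cc_ge1 by linarith
    then have "0 < (1 + T.cc + T.cc*(real a+1))/(1 - T.\<rho>)" using K0 by simp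
    moreover have "64*((1 + T.cc + T.cc*(real a+1))/(1 - T.\<rho>)) \<le> real B1"
      using B1 by (simp only: rho ccd)
    ultimately have "0 < real B1" by linarith
    then show ?thesis by simp
  qed
  have b1: "1 \<le> B1*t" using B1pos t2 by simp
  have tf: "1 - succ_prob R err (trial n (a*t+1) (B1*t) 0 0) \<le> T.\<phi>0 + T.w0 / real (B1*t)"
  proof -
    have e1: "T.\<Phi> 0 0 = T.\<phi>0" unfolding T.\<Phi>_def by simp
    have e2: "T.Wf 0 0 = T.w0" unfolding T.Wf_def by simp
    have "0 < a*t+1" by simp
    from T.trial_fail[OF b1 this, of 0] show ?thesis unfolding e1 e2 .
  qed
  have ph: "T.\<phi>0 \<le> 1/64"
  proof -
    have aT: "T.\<rho>^a \<le> (1 - T.\<rho>)/128" using a(2) by (simp only: rho)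
    have ra: "0 \<le> T.\<rho>^a" "2 * T.\<rho>^a \<le> 1" using aT r0 by auto
    have "T.\<phi>0 = (real n / real k) * (T.\<rho>^a)^t / (1 - T.\<rho>)"
      unfolding T.\<phi>0_def by (simp add: power_mult)
    also have "\<dots> \<le> real t * (T.\<rho>^a)^t / (1 - T.\<rho>)"
      using t1 K0 r0 by (intro divide_right_mono mult_right_mono) auto
    also have "\<dots> \<le> 2 * T.\<rho>^a / (1 - T.\<rho>)"
      using tpow[OF ra t2] K0 by (intro divide_right_mono) auto
    also have "\<dots> \<le> 2 * ((1 - T.\<rho>)/128) / (1 - T.\<rho>)"
      using aT K0 by (intro divide_right_mono mult_left_mono) auto
    also have "\<dots> = 1/64" using K0 by simp
    finally show ?thesis .
  qed
  have wb: "T.w0 / real (B1*t) \<le> 1/64"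
  proof -
    define K where "K = (1 + T.cc + T.cc*(real a+1))/(1 - T.\<rho>)"
    have K064: "64 * K \<le> real B1" using B1 unfolding K_def by (simp only: rho ccd)
    have "0 \<le> T.cc*(real a+1)" using T.cc_ge1 by simp
    then have "0 < 1 + T.cc + T.cc*(real a+1)" using T.cc_ge1 by linarith
    then have Kpos: "0 < K" using K0 by (simp add: K_def)
    have H: "real (a*t+1) \<le> (real a + 1) * real t" using t2 by (simp add: algebra_simps)
    have "T.w0 = ((real n / real k)*(1+T.cc) + T.cc*real (a*t+1)) / (1 - T.\<rho>)"
      unfolding T.w0_def using R by (simp add: field_simps)
    also have "\<dots> \<le> (real t*(1+T.cc) + T.cc*((real a + 1) * real t)) / (1 - T.\<rho>)"
      using t1 H T.cc_ge1 K0 by (intro divide_right_mono add_mono mult_right_mono mult_left_mono) auto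
    also have "\<dots> = real t * K" by (simp add: K_def algebra_simps add_divide_distrib)
    finally have w: "T.w0 \<le> real t * K" .
    have "T.w0 / real (B1*t) \<le> (real t * K) / (real t * (64 * K))"
    proof (rule frac_le)
      show "0 \<le> real t * K" using Kpos by simp
      show "T.w0 \<le> real t * K" by (rule w)
      show "0 < real t * (64 * K)" using Kpos t2 by simp
      show "real t * (64 * K) \<le> real (B1 * t)" using K064 t2 by (simp add: mult.commute mult_left_mono)
    qed
    also have "\<dots> = 1/64" using Kpos t2 by simp
    finally show ?thesis .
  qed
  show ?thesis using tf ph wb by linarith
qed

lemma small_pow:
  fixes b :: real and n M :: nat
  assumes b: "1 < b" and h: "2 * ln (real n) \<le> real M * ln b" and n: "2 \<le> n"
  shows "b powr (- real M) \<le> 1 / (2 * real n)"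
proof -
  have n0: "0 < real n" using n by simp
  have e: "b powr (- real M) = exp (- (real M * ln b))" using b unfolding powr_def by simp
  have le: "exp (- (real M * ln b)) \<le> exp (- (2 * ln (real n)))"
    using h by (subst exp_le_cancel_iff) linarith
  have e2: "exp (2 * ln (real n)) = real n * real n"
  proof -
    have "exp (2 * ln (real n)) = exp (ln (real n) + ln (real n))" by (simp only: mult_2)
    also have "\<dots> = real n * real n" using n0 by (simp only: exp_add exp_ln)
    finally show ?thesis .
  qed
  have e3: "exp (- (2 * ln (real n))) = 1 / (real n * real n)"
    by (simp only: exp_minus e2 inverse_eq_divide)
  have f: "1 / (real n * real n) \<le> 1 / (2 * real n)"
  proof (rule divide_left_mono)
    show "2 * real n \<le> real n * real n" using n by (intro mult_right_mono) auto
  qed (use n0 in auto)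
  show ?thesis using e le e3 f by linarith
qed

lemma relab_good:
  fixes c p :: real and A :: "nat \<Rightarrow> alg" and M :: nat
  assumes p0: "0 \<le> p" and c: "c > 1"
    and A_correct: "\<And>N R err. R \<subseteq> {..<N} \<Longrightarrow> real (card R) \<ge> 3/4 * real N \<Longrightarrow>
         valid_noise p err \<Longrightarrow> succ_prob R err (A N) \<ge> 1 - c powr (- real N)"
    and vn: "valid_noise p err" and len: "length ys = M"
  shows "succ_prob R err (relab ys (A M)) \<ge> 1 - c powr (- real M) - 16^(nf R ys) / 2^M"
proof -
  define R' where "R' = {i. i < length ys \<and> ys!i \<in> R}"
  define err' where "err' = (\<lambda>i. if i < length ys then err (ys!i) else 0)"
  have s1: "succ_prob R err (relab ys (A M)) \<ge> succ_prob R' err' (A M)"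
    unfolding R'_def err'_def by (rule succ_relab)
  have cp: "0 \<le> c powr (- real M)" by simp
  show ?thesis
  proof (cases "4 * nf R ys \<le> M")
    case True
    have cR: "card R' = length (filter (\<lambda>x. x \<in> R) ys)"
      unfolding R'_def by (simp add: length_filter_conv_card)
    have "length (filter (\<lambda>x. x \<in> R) ys) + nf R ys = M"
      using sum_length_filter_compl[of "\<lambda>x. x \<in> R" ys] len by (simp add: nf_def)
    then have "real (card R') \<ge> 3/4 * real M" using True cR by linarith
    moreover have "R' \<subseteq> {..<M}" using len by (auto simp: R'_def)
    moreover have "valid_noise p err'" using vn p0 by (auto simp: valid_noise_def err'_def)
    ultimately have "succ_prob R' err' (A M) \<ge> 1 - c powr (- real M)" using A_correct by blast
    moreover have "0 \<le> 16^(nf R ys) / (2^M :: real)" by simp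
    ultimately show ?thesis using s1 by linarith
  next
    case False
    have "(2::real)^M \<le> 2^(4 * nf R ys)" using False by (intro power_increasing) auto
    also have "\<dots> = 16^(nf R ys)" by (simp add: power_mult)
    finally have "1 \<le> 16^(nf R ys) / (2^M :: real)" by simp
    then show ?thesis using s1 cp succ_nonneg[of R' err' "A M"] by linarith
  qed
qed

theorem lemma7:
  fixes p c :: real and A :: "nat \<Rightarrow> alg"
  assumes p: "0 \<le> p" "p < 1/2"
    and c: "c > 1"
    and A_correct: "\<And>N R err. R \<subseteq> {..<N} \<Longrightarrow> real (card R) \<ge> 3/4 * real N \<Longrightarrow>
         valid_noise p err \<Longrightarrow> succ_prob R err (A N) \<ge> 1 - c powr (- real N)"
  shows "\<exists>C c1 c2 :: real. C > 0 \<and> c1 > 0 \<and> c2 > 0 \<and>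
    (\<forall>k::nat. k \<ge> 1 \<longrightarrow> (\<exists>(B :: nat \<Rightarrow> alg) (m :: nat \<Rightarrow> nat).
       (\<forall>n R err. k \<le> n \<longrightarrow> R \<subseteq> {..<n} \<longrightarrow> card R = k \<longrightarrow> valid_noise p err \<longrightarrow>
            succ_prob R err (B n) \<ge> 1 - 1 / real n)
     \<and> (\<forall>n. n \<ge> 2 \<longrightarrow>
            c1 * ln (real n) \<le> real (m n) \<and> real (m n) \<le> c2 * ln (real n) \<and>
            real (time (B n)) \<le> C * (real n / real k) * ln (real n) + real (time (A (m n))))))"
proof -
  define \<rho> where "\<rho> = 1/(2*(1-p))"
  define cc where "cc = 1/(1-2*p)"
  have r0: "0 < \<rho>" using p by (simp add: \<rho>_def)
  have r1: "\<rho> < 1"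
  proof -
    have "1 < 2*(1-p)" using p by simp
    then show ?thesis unfolding \<rho>_def by simp
  qed
  have cc1: "1 \<le> cc"
  proof -
    have "0 < 1-2*p" "1-2*p \<le> 1" using p by auto
    then show ?thesis unfolding cc_def by simp
  qed
  obtain a0 where a0: "\<rho>^a0 < (1-\<rho>)/128" using real_arch_pow_inv[of "(1-\<rho>)/128" \<rho>] r1 by auto
  define a where "a = Suc a0"
  have a1: "1 \<le> a" by (simp add: a_def)
  have aR: "\<rho>^a \<le> (1-\<rho>)/128"
  proof -
    have "\<rho>^a = \<rho> * \<rho>^a0" by (simp add: a_def)
    also have "\<dots> \<le> 1 * \<rho>^a0" using r0 r1 by (intro mult_right_mono) auto
    finally show ?thesis using a0 by simp
  qed
  define K where "K = (1 + cc + cc*(real a+1))/(1-\<rho>)"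
  define B1 :: nat where "B1 = nat \<lceil>64*K\<rceil>"
  have B1b: "64*K \<le> real B1" unfolding B1_def by linarith
  have Kpos: "0 < K"
  proof -
    have "0 \<le> cc*(real a+1)" using cc1 by simp
    then have "0 < 1 + cc + cc*(real a+1)" using cc1 by linarith
    then show ?thesis using r1 by (simp add: K_def)
  qed
  have B1pos: "0 < real B1" using B1b Kpos by linarith
  define L0 where "L0 = min (ln (4/3)) (ln c)"
  have L0pos: "0 < L0" using c by (simp add: L0_def)
  define a2 where "a2 = 2/L0"
  have a2pos: "0 < a2" using L0pos by (simp add: a2_def)
  define mm where "mm n = nat \<lceil>a2 * ln (real n)\<rceil>" for n :: nat
  define c2 where "c2 = a2 + 1/ln 2"
  have "0 < ln (2::real)" by simp
  then have c2pos: "0 < c2" using a2pos unfolding c2_def by (simp add: add_pos_pos)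
  define C where "C = 2*real B1*c2"
  have Cpos: "0 < C" using B1pos c2pos by (simp add: C_def)
  have mlow: "a2 * ln (real n) \<le> real (mm n)" for n
    unfolding mm_def by linarith
  have mhigh: "real (mm n) \<le> c2 * ln (real n)" if n2: "2 \<le> n" for n
  proof -
    have ln0: "0 \<le> ln (real n)" using n2 by simp
    have "real (mm n) \<le> a2 * ln (real n) + 1"
      unfolding mm_def using a2pos ln0 by (simp add: of_nat_nat)
    also have "1 \<le> ln (real n) / ln 2"
    proof -
      have "ln 2 \<le> ln (real n)" using n2 by simp
      then show ?thesis by simp
    qed
    then have "a2 * ln (real n) + 1 \<le> a2 * ln (real n) + ln (real n) / ln 2" by simp
    also have "\<dots> = c2 * ln (real n)" by (simp add: c2_def algebra_simps)
    finally show ?thesis by simp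
  qed
  show ?thesis
  proof (rule exI[of _ C], rule exI[of _ a2], rule exI[of _ c2], intro conjI allI impI)
    show "0 < C" "0 < a2" "0 < c2" using Cpos a2pos c2pos by auto
    fix k :: nat assume k1: "1 \<le> k"
    define t where "t n = nat \<lceil>real n / real k\<rceil>" for n
    define B where "B n = (if k \<le> n then collect (trial n (a * t n + 1) (B1 * t n) 0 0) (\<lambda>ys. relab ys (A (mm n))) (mm n) [] else Ret 0)" for n
    show "\<exists>(B :: nat \<Rightarrow> alg) (m :: nat \<Rightarrow> nat).
       (\<forall>n R err. k \<le> n \<longrightarrow> R \<subseteq> {..<n} \<longrightarrow> card R = k \<longrightarrow> valid_noise p err \<longrightarrow>
            succ_prob R err (B n) \<ge> 1 - 1 / real n)
     \<and> (\<forall>n. n \<ge> 2 \<longrightarrow>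
            a2 * ln (real n) \<le> real (m n) \<and> real (m n) \<le> c2 * ln (real n) \<and>
            real (time (B n)) \<le> C * (real n / real k) * ln (real n) + real (time (A (m n))))"
    proof (rule exI[of _ B], rule exI[of _ mm], intro conjI allI impI)
      fix n R err
      assume kn: "k \<le> n" and Rs: "R \<subseteq> {..<n}" and cR: "card R = k" and vn: "valid_noise p err"
      show "succ_prob R err (B n) \<ge> 1 - 1 / real n"
      proof (cases "n = 1")
        case True then show ?thesis using succ_nonneg by simp
      next
        case False
        then have n2: "2 \<le> n" using kn k1 by simp
        let ?M = "mm n"
        let ?T = "trial n (a * t n + 1) (B1 * t n) 0 0"
        have Tg: "1 - succ_prob R err ?T \<le> 1/32"
        proof (rule trial_good[OF Rs cR k1 kn vn p(2) a1])
          show "(1/(2*(1-p)))^a \<le> (1 - 1/(2*(1-p)))/128" using aR by (simp add: \<rho>_def)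
          show "64*((1 + 1/(1-2*p) + 1/(1-2*p)*(real a+1))/(1 - 1/(2*(1-p)))) \<le> real B1"
            using B1b by (simp add: K_def cc_def \<rho>_def)
          show "t n = nat \<lceil>real n / real k\<rceil>" by (simp add: t_def)
        qed
        have Fg: "succ_prob R err (relab ys (A ?M)) \<ge> 1 - c powr (- real ?M) - 16^(nf R ys) / 2^?M"
          if "length ys = ?M" for ys
          by (rule relab_good[OF p(1) c A_correct vn that])
        have main: "succ_prob R err (collect ?T (\<lambda>ys. relab ys (A ?M)) ?M []) \<ge>
            1 - c powr (- real ?M) - 16^(nf R []) * (3/2)^?M / 2^?M"
          by (rule succ_collect[OF Tg Fg]) simp_all
        have e1: "16^(nf R []) * (3/2)^?M / 2^?M = (4/3::real) powr (- real ?M)"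
        proof -
          have "nf R [] = 0" by (simp add: nf_def)
          then have "16^(nf R []) * (3/2)^?M / 2^?M = (3/2::real)^?M / 2^?M" by simp
          also have "\<dots> = ((3/2)/2::real)^?M" by (rule power_divide[symmetric])
          also have "((3/2)/2::real) = inverse (4/3)" by simp
          also have "(inverse (4/3::real))^?M = inverse ((4/3::real)^?M)" by (rule power_inverse)
          also have "\<dots> = (4/3::real) powr (- real ?M)" by (simp add: powr_minus powr_realpow)
          finally show ?thesis .
        qed
        have hM: "2 * ln (real n) \<le> real ?M * L0"
        proof -
          have "2 * ln (real n) = (a2 * ln (real n)) * L0" using L0pos by (simp add: a2_def)
          also have "\<dots> \<le> real ?M * L0" using mlow[of n] L0pos by (intro mult_right_mono) auto
          finally show ?thesis .
        qed
        have b1: "(4/3::real) powr (- real ?M) \<le> 1/(2*real n)"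
        proof (rule small_pow[OF _ _ n2])
          show "2 * ln (real n) \<le> real ?M * ln (4/3)"
            using hM by (rule order_trans) (intro mult_left_mono, auto simp: L0_def)
        qed simp
        have b2: "c powr (- real ?M) \<le> 1/(2*real n)"
        proof (rule small_pow[OF c _ n2])
          show "2 * ln (real n) \<le> real ?M * ln c"
            using hM by (rule order_trans) (intro mult_left_mono, auto simp: L0_def)
        qed
        have hh: "1/(2*real n) + 1/(2*real n) = 1 / real n" by simp
        have Bn: "B n = collect ?T (\<lambda>ys. relab ys (A ?M)) ?M []" using kn by (simp add: B_def)
        show ?thesis unfolding Bn using main unfolding e1 using b1 b2 hh by linarith
      qed
    next
      fix n :: nat assume n2: "2 \<le> n"
      show "a2 * ln (real n) \<le> real (mm n)" by (rule mlow)
      show "real (mm n) \<le> c2 * ln (real n)" by (rule mhigh[OF n2])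
      show "real (time (B n)) \<le> C * (real n / real k) * ln (real n) + real (time (A (mm n)))"
      proof (cases "k \<le> n")
        case False
        have "0 \<le> C * (real n / real k) * ln (real n)" using Cpos n2 by simp
        then show ?thesis using False by (simp add: B_def)
      next
        case True
        have tc: "time (B n) \<le> mm n * time (trial n (a * t n + 1) (B1 * t n) 0 0) + time (A (mm n))"
          unfolding B_def using True by (simp add: time_collect time_relab)
        have "mm n * time (trial n (a * t n + 1) (B1 * t n) 0 0) \<le> mm n * (B1 * t n)"
          by (rule mult_le_mono2[OF time_trial])
        then have tn: "time (B n) \<le> mm n * (B1 * t n) + time (A (mm n))" using tc by linarith
        have "real (time (B n)) \<le> real (mm n * (B1 * t n) + time (A (mm n)))"
          using tn by (simp only: of_nat_le_iff)
        also have "\<dots> = real (mm n) * real B1 * real (t n) + real (time (A (mm n)))" by simp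
        finally have tr: "real (time (B n)) \<le> real (mm n) * real B1 * real (t n) + real (time (A (mm n)))" .
        have nk1: "1 \<le> real n / real k" using True k1 by simp
        have tb: "real (t n) \<le> 2 * (real n / real k)"
        proof -
          have "real (t n) \<le> real n / real k + 1" unfolding t_def using nk1 by (simp add: of_nat_nat)
          then show ?thesis using nk1 by linarith
        qed
        have ln0: "0 \<le> ln (real n)" using n2 by simp
        have "real (mm n) * real B1 * real (t n) \<le> (c2 * ln (real n)) * real B1 * (2 * (real n / real k))"
          using mhigh[OF n2] tb B1pos by (intro mult_mono) auto
        also have "\<dots> = C * (real n / real k) * ln (real n)" by (simp add: C_def algebra_simps)
        finally show ?thesis using tr by linarith
      qed
    qed
  qed
qed

end
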